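(* Let $P$ be a program which is safe w.r.t. a mode $M$, let $\mathit{Eqs}$ be a conjunction of equations, and let $G_1$ be a goal without occurrences of disequations. For all goals $G_2$, if there exists a goal $(A',G')$ such that $A'$ is a non-basic atom which does not satisfy $M$ and $(\mathit{Eqs},G_1,G_2)\longmapsto^*_P(A',G')$, then there exists a goal $(A'',G'')$ such that $A''$ is a non-basic atom which does not satisfy $M$ and $(G_1,\mathit{Eqs},G_2)\longmapsto^*_P(A'',G'')$.
   Context: Predicate symbols $\mathit{true}$, $=$, $\neq$ are basic, all others non-basic. Basic atoms: $\mathit{true}$, $t_1=t_2$ (equation), $t_1\neq t_2$ (disequation); non-basic atoms $p(t_1,\dots,t_m)$, $p$ non-basic. A goal is a conjunction of atoms ("," associative, neutral element $\mathit{true}$). A clause $C$ is $A\leftarrow G$ with non-basic head $hd(C)$ and body $bd(C)$; a program is a set of clauses. All mgu's are relevant and idempotent. A variable $X$ is a local variable of goal $G$ in clause $H\leftarrow G_1,G,G_2$ iff $X\in vars(G)-vars(H,G_1,G_2)$. Operational semantics: (1) $(t_1=t_2,G)\longmapsto_P G\vartheta$ if $t_1,t_2$ unify with mgu $\vartheta$; (2) $(t_1\neq t_2,G)\longmapsto_P G$ if $t_1,t_2$ are not unifiable; (3) $(A,G)\longmapsto_P(bd(C),G)\vartheta$ if $A$ is non-basic, $C$ a renamed apart clause of $P$ and $\vartheta$ an mgu of $A$ and $hd(C)$; $\longmapsto^*_P$ is the reflexive-transitive closure. Modes: a mode for non-basic $p$ of arity $h$ is $p(m_1,\dots,m_h)$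 with $m_i\in\{+,?\}$; $t_i$ is an input argument iff $m_i=+$, and variables in input arguments are input variables; a mode for a program contains exactly one mode for each non-basic predicate occurring in it. An atom satisfies $M$ iff $M$ has a mode for its predicate and its input arguments are ground. A clause $C$ is safe w.r.t. $M$ iff each variable of each disequation $t_1\neq t_2$ in $bd(C)$ is an input variable of $hd(C)$ or a local variable of $t_1\neq t_2$ in $C$; a program is safe iff all its clauses are. *)

theory Defs
  imports Main "HOL-Library.Infinite_Typeclass"
begin

datatype ('f, 'v) trm = Var 'v | Fn 'f "('f, 'v) trm list"

fun tvars :: "('f, 'v) trm \<Rightarrow> 'v set" where
  "tvars (Var x) = {x}"
| "tvars (Fn f ts) = (\<Union>t\<in>set ts. tvars t)"

type_synonym ('f, 'v) subst = "'v \<Rightarrow> ('f, 'v) trm"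

fun tsubst :: "('f, 'v) subst \<Rightarrow> ('f, 'v) trm \<Rightarrow> ('f, 'v) trm" where
  "tsubst \<sigma> (Var x) = \<sigma> x"
| "tsubst \<sigma> (Fn f ts) = Fn f (map (tsubst \<sigma>) ts)"

definition ground :: "('f, 'v) trm \<Rightarrow> bool" where
  "ground t \<longleftrightarrow> tvars t = {}"

definition subst_comp :: "('f, 'v) subst \<Rightarrow> ('f, 'v) subst \<Rightarrow> ('f, 'v) subst" where
  "subst_comp \<sigma> \<tau> = (\<lambda>x. tsubst \<tau> (\<sigma> x))"

definition sdom :: "('f, 'v) subst \<Rightarrow> 'v set" where
  "sdom \<sigma> = {x. \<sigma> x \<noteq> Var x}"

definition svars :: "('f, 'v) subst \<Rightarrow> 'v set" where
  "svars \<sigma> = sdom \<sigma> \<union> (\<Union>x\<in>sdom \<sigma>. tvars (\<sigma> x))"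

definition unifier :: "('f, 'v) subst \<Rightarrow> ('f, 'v) trm list \<Rightarrow> ('f, 'v) trm list \<Rightarrow> bool" where
  "unifier \<sigma> ss ts \<longleftrightarrow> map (tsubst \<sigma>) ss = map (tsubst \<sigma>) ts"

definition unifiable :: "('f, 'v) trm list \<Rightarrow> ('f, 'v) trm list \<Rightarrow> bool" where
  "unifiable ss ts \<longleftrightarrow> (\<exists>\<sigma>. unifier \<sigma> ss ts)"

definition mgu :: "('f, 'v) subst \<Rightarrow> ('f, 'v) trm list \<Rightarrow> ('f, 'v) trm list \<Rightarrow> bool" where
  "mgu \<sigma> ss ts \<longleftrightarrow> unifier \<sigma> ss ts \<and>
     (\<forall>\<tau>. unifier \<tau> ss ts \<longrightarrow> (\<exists>\<gamma>. \<tau> = subst_comp \<sigma> \<gamma>))"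

definition rmgu :: "('f, 'v) subst \<Rightarrow> ('f, 'v) trm list \<Rightarrow> ('f, 'v) trm list \<Rightarrow> bool" where
  "rmgu \<sigma> ss ts \<longleftrightarrow> mgu \<sigma> ss ts \<and> subst_comp \<sigma> \<sigma> = \<sigma> \<and>
     svars \<sigma> \<subseteq> (\<Union>t\<in>set ss \<union> set ts. tvars t)"

text \<open>The atom \<open>true\<close> is the neutral element of conjunction; goals are lists
  of atoms and \<open>true\<close> is represented by the empty goal.\<close>
datatype ('p, 'f, 'v) atom =
    Eq "('f, 'v) trm" "('f, 'v) trm"
  | Neq "('f, 'v) trm" "('f, 'v) trm"
  | Pred 'p "('f, 'v) trm list"

type_synonym ('p, 'f, 'v) goal = "('p, 'f, 'v) atom list"

fun nonbasic :: "('p, 'f, 'v) atom \<Rightarrow> bool" where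
  "nonbasic (Pred p ts) = True"
| "nonbasic _ = False"

fun is_eq :: "('p, 'f, 'v) atom \<Rightarrow> bool" where
  "is_eq (Eq s t) = True"
| "is_eq _ = False"

fun is_neq :: "('p, 'f, 'v) atom \<Rightarrow> bool" where
  "is_neq (Neq s t) = True"
| "is_neq _ = False"

fun avars :: "('p, 'f, 'v) atom \<Rightarrow> 'v set" where
  "avars (Eq s t) = tvars s \<union> tvars t"
| "avars (Neq s t) = tvars s \<union> tvars t"
| "avars (Pred p ts) = (\<Union>t\<in>set ts. tvars t)"

definition gvars :: "('p, 'f, 'v) goal \<Rightarrow> 'v set" where
  "gvars G = (\<Union>a\<in>set G. avars a)"

fun asubst :: "('f, 'v) subst \<Rightarrow> ('p, 'f, 'v) atom \<Rightarrow> ('p, 'f, 'v) atom" where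
  "asubst \<sigma> (Eq s t) = Eq (tsubst \<sigma> s) (tsubst \<sigma> t)"
| "asubst \<sigma> (Neq s t) = Neq (tsubst \<sigma> s) (tsubst \<sigma> t)"
| "asubst \<sigma> (Pred p ts) = Pred p (map (tsubst \<sigma>) ts)"

definition gsubst :: "('f, 'v) subst \<Rightarrow> ('p, 'f, 'v) goal \<Rightarrow> ('p, 'f, 'v) goal" where
  "gsubst \<sigma> G = map (asubst \<sigma>) G"

datatype ('p, 'f, 'v) clause = Clause (hd_pred: 'p) (hd_args: "('f, 'v) trm list") (bd: "('p, 'f, 'v) goal")

type_synonym ('p, 'f, 'v) program = "('p, 'f, 'v) clause set"

definition cvars :: "('p, 'f, 'v) clause \<Rightarrow> 'v set" where
  "cvars C = (\<Union>t\<in>set (hd_args C). tvars t) \<union> gvars (bd C)"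

definition rename_clause :: "('v \<Rightarrow> 'v) \<Rightarrow> ('p, 'f, 'v) clause \<Rightarrow> ('p, 'f, 'v) clause" where
  "rename_clause \<rho> C =
     Clause (hd_pred C) (map (tsubst (Var \<circ> \<rho>)) (hd_args C)) (gsubst (Var \<circ> \<rho>) (bd C))"

inductive step :: "('p, 'f, 'v) program \<Rightarrow> ('p, 'f, 'v) goal \<Rightarrow> ('p, 'f, 'v) goal \<Rightarrow> bool" where
  eq_step: "rmgu \<theta> [s] [t] \<Longrightarrow> step P (Eq s t # G) (gsubst \<theta> G)"
| neq_step: "\<not> unifiable [s] [t] \<Longrightarrow> step P (Neq s t # G) G"
| pred_step: "\<lbrakk> C \<in> P; bij \<rho>; C' = rename_clause \<rho> C;
                cvars C' \<inter> gvars (Pred p ts # G) = {};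
                hd_pred C' = p; rmgu \<theta> ts (hd_args C') \<rbrakk>
              \<Longrightarrow> step P (Pred p ts # G) (gsubst \<theta> (bd C' @ G))"

abbreviation steps :: "('p, 'f, 'v) program \<Rightarrow> ('p, 'f, 'v) goal \<Rightarrow> ('p, 'f, 'v) goal \<Rightarrow> bool" where
  "steps P \<equiv> (step P)\<^sup>*\<^sup>*"

text \<open>A mode assigns to (some) predicate symbols of a given arity at most one mode,
  a list of flags of that length; \<open>True\<close> stands for \<open>+\<close> (input), \<open>False\<close> for \<open>?\<close>.\<close>
type_synonym 'p mode = "('p \<times> nat) \<Rightarrow> bool list option"

definition is_mode :: "'p mode \<Rightarrow> bool" where
  "is_mode M \<longleftrightarrow> (\<forall>p n ms. M (p, n) = Some ms \<longrightarrow> length ms = n)"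

definition input_vars :: "'p mode \<Rightarrow> 'p \<Rightarrow> ('f, 'v) trm list \<Rightarrow> 'v set" where
  "input_vars M p ts =
     (case M (p, length ts) of None \<Rightarrow> {}
      | Some ms \<Rightarrow> (\<Union>i\<in>{i. i < length ts \<and> ms ! i}. tvars (ts ! i)))"

fun satisfies :: "'p mode \<Rightarrow> ('p, 'f, 'v) atom \<Rightarrow> bool" where
  "satisfies M (Pred p ts) =
     (\<exists>ms. M (p, length ts) = Some ms \<and> (\<forall>i<length ts. ms ! i \<longrightarrow> ground (ts ! i)))"
| "satisfies M _ = False"

definition safe_clause :: "'p mode \<Rightarrow> ('p, 'f, 'v) clause \<Rightarrow> bool" where
  "safe_clause M C \<longleftrightarrow>
     (\<forall>G1 s t G2. bd C = G1 @ Neq s t # G2 \<longrightarrow>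
        (\<forall>X \<in> tvars s \<union> tvars t.
           X \<in> input_vars M (hd_pred C) (hd_args C) \<or>
           X \<notin> (\<Union>u\<in>set (hd_args C). tvars u) \<union> gvars G1 \<union> gvars G2))"

definition safe :: "'p mode \<Rightarrow> ('p, 'f, 'v) program \<Rightarrow> bool" where
  "safe M P \<longleftrightarrow> (\<forall>C\<in>P. safe_clause M C)"

end

theory Submission
  imports Defs
begin



lemma tsubst_comp[simp]: "tsubst (subst_comp \<sigma> \<tau>) t = tsubst \<tau> (tsubst \<sigma> t)"
  by (induction t) (auto simp: subst_comp_def)

lemma subst_comp_assoc: "subst_comp (subst_comp a b) c = subst_comp a (subst_comp b c)"
  by (rule ext) (simp add: subst_comp_def tsubst_comp[unfolded subst_comp_def])

lemma tvars_tsubst: "tvars (tsubst \<sigma> t) = (\<Union>x\<in>tvars t. tvars (\<sigma> x))"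
  by (induction t) auto

lemma tsubst_cong: "(\<And>x. x \<in> tvars t \<Longrightarrow> \<sigma> x = \<tau> x) \<Longrightarrow> tsubst \<sigma> t = tsubst \<tau> t"
  by (induction t) auto

lemma tsubst_Var[simp]: "tsubst Var t = t"
  by (induction t) (auto simp: map_idI)

lemma ground_tsubst: "tvars t = {} \<Longrightarrow> tsubst \<sigma> t = t"
  using tsubst_cong[of t \<sigma> Var] by simp

lemma finite_tvars[simp]: "finite (tvars t)"
  by (induction t) auto

lemma subst_comp_Var[simp]: "subst_comp Var \<sigma> = \<sigma>" "subst_comp \<sigma> Var = \<sigma>"
  by (auto simp: subst_comp_def)

lemma not_svars: "x \<notin> svars \<theta> \<Longrightarrow> \<theta> x = Var x"
  by (auto simp: svars_def sdom_def)

lemma tvars_tsubst_sub: "tvars (tsubst \<theta> t) \<subseteq> tvars t \<union> svars \<theta>"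
  unfolding tvars_tsubst by (auto simp: svars_def sdom_def) (metis empty_iff insert_iff tvars.simps(1))

lemma tsubst_fix: "tvars t \<inter> svars \<theta> = {} \<Longrightarrow> tsubst \<theta> t = t"
  using tsubst_cong[of t \<theta> Var] not_svars by fastforce

lemma asubst_comp[simp]: "asubst (subst_comp \<sigma> \<tau>) a = asubst \<tau> (asubst \<sigma> a)"
  by (cases a) auto
lemma gsubst_comp[simp]: "gsubst (subst_comp \<sigma> \<tau>) G = gsubst \<tau> (gsubst \<sigma> G)"
  by (auto simp: gsubst_def)
lemma asubst_cong: "(\<And>x. x \<in> avars a \<Longrightarrow> \<sigma> x = \<tau> x) \<Longrightarrow> asubst \<sigma> a = asubst \<tau> a"
  by (cases a) (auto intro!: tsubst_cong)
lemma gsubst_cong: "(\<And>x. x \<in> gvars G \<Longrightarrow> \<sigma> x = \<tau> x) \<Longrightarrow> gsubst \<sigma> G = gsubst \<tau> G"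
  by (auto simp: gsubst_def gvars_def intro!: asubst_cong)
lemma gsubst_append[simp]: "gsubst \<sigma> (A @ B) = gsubst \<sigma> A @ gsubst \<sigma> B"
  by (auto simp: gsubst_def)
lemma gsubst_Cons[simp]: "gsubst \<sigma> (a # B) = asubst \<sigma> a # gsubst \<sigma> B"
  by (auto simp: gsubst_def)
lemma gsubst_Nil[simp]: "gsubst \<sigma> [] = []"
  by (auto simp: gsubst_def)
lemma gvars_append[simp]: "gvars (A @ B) = gvars A \<union> gvars B"
  by (auto simp: gvars_def)
lemma gvars_Cons[simp]: "gvars (a # B) = avars a \<union> gvars B"
  by (auto simp: gvars_def)
lemma gvars_Nil[simp]: "gvars [] = {}"
  by (auto simp: gvars_def)
lemma avars_asubst_sub: "avars (asubst \<theta> a) \<subseteq> avars a \<union> svars \<theta>"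
  by (cases a) (use tvars_tsubst_sub in fastforce)+
lemma gvars_gsubst_sub: "gvars (gsubst \<theta> G) \<subseteq> gvars G \<union> svars \<theta>"
  unfolding gvars_def gsubst_def using avars_asubst_sub by fastforce
lemma asubst_Var[simp]: "asubst Var a = a" by (cases a) (auto simp: map_idI)
lemma gsubst_Var[simp]: "gsubst Var G = G" by (induction G) auto

definition unifs :: "('f,'v) subst \<Rightarrow> (('f,'v) trm \<times> ('f,'v) trm) list \<Rightarrow> bool" where
  "unifs \<sigma> E \<longleftrightarrow> (\<forall>(s,t)\<in>set E. tsubst \<sigma> s = tsubst \<sigma> t)"
definition evars :: "(('f,'v) trm \<times> ('f,'v) trm) list \<Rightarrow> 'v set" where
  "evars E = (\<Union>(s,t)\<in>set E. tvars s \<union> tvars t)"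
definition esize :: "(('f,'v) trm \<times> ('f,'v) trm) list \<Rightarrow> nat" where
  "esize E = sum_list (map (\<lambda>(s,t). size s + size t + 1) E)"

lemma zip_facts:
  assumes "length ss = length ts"
  shows "evars (zip ss ts) = (\<Union>t\<in>set ss \<union> set ts. tvars t)"
    "unifs \<tau> (zip ss ts) \<longleftrightarrow> map (tsubst \<tau>) ss = map (tsubst \<tau>) ts"
  using assms by (induction ss ts rule: list_induct2) (auto simp: evars_def unifs_def)

lemma unifs_simps[simp]: "unifs \<tau> ((s,t)#E) \<longleftrightarrow> tsubst \<tau> s = tsubst \<tau> t \<and> unifs \<tau> E"
  "unifs \<tau> (E1 @ E2) \<longleftrightarrow> unifs \<tau> E1 \<and> unifs \<tau> E2" "unifs \<tau> []"
  by (auto simp: unifs_def)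
lemma evars_simps[simp]: "evars ((s,t)#E) = tvars s \<union> tvars t \<union> evars E"
  "evars (E1 @ E2) = evars E1 \<union> evars E2" "evars [] = {}"
  by (auto simp: evars_def)

lemma esize_zip: "length ss = length ts \<Longrightarrow> esize (zip ss ts) \<le> size_list size ss + size_list size ts"
  by (induction ss ts rule: list_induct2) (auto simp: esize_def)

lemma finite_evars[simp]: "finite (evars E)"
  by (auto simp: evars_def)

lemma occurs_size: "x \<in> tvars t \<Longrightarrow> t \<noteq> Var x \<Longrightarrow> size (\<sigma> x) < size (tsubst \<sigma> t)"
proof (induction t)
  case (Var y) then show ?case by simp
next
  case (Fn f ts)
  then obtain u where u: "u \<in> set ts" "x \<in> tvars u" by auto
  have "size (tsubst \<sigma> u) \<le> size_list size (map (tsubst \<sigma>) ts)"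
    using u(1) by (induction ts) auto
  moreover have "size (\<sigma> x) \<le> size (tsubst \<sigma> u)"
  proof (cases "u = Var x")
    case True then show ?thesis by simp
  next
    case False then show ?thesis using Fn.IH[OF u] by simp
  qed
  ultimately show ?case by simp
qed

definition ugood :: "('f,'v) subst \<Rightarrow> (('f,'v) trm \<times> ('f,'v) trm) list \<Rightarrow> bool" where
  "ugood \<theta> E \<longleftrightarrow> unifs \<theta> E \<and> (\<forall>\<tau>. unifs \<tau> E \<longrightarrow> (\<exists>\<gamma>. \<tau> = subst_comp \<theta> \<gamma>)) \<and>
     subst_comp \<theta> \<theta> = \<theta> \<and> svars \<theta> \<subseteq> evars E"

lemma ugoodD:
  assumes "ugood \<theta> E"
  shows "unifs \<theta> E" "\<And>\<tau>. unifs \<tau> E \<Longrightarrow> \<exists>\<gamma>. \<tau> = subst_comp \<theta> \<gamma>"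
    "subst_comp \<theta> \<theta> = \<theta>" "svars \<theta> \<subseteq> evars E"
  using assms unfolding ugood_def by blast+

lemma var_case:
  fixes x :: 'v and t :: "('f,'v) trm"
  assumes eqv: "\<And>\<tau>. unifs \<tau> E \<longleftrightarrow> \<tau> x = tsubst \<tau> t \<and> unifs \<tau> E'"
    and ev: "evars E = insert x (tvars t \<union> evars E')"
    and ne: "t \<noteq> Var x" and un: "unifs \<sigma> E"
    and IH: "\<And>(E'' :: (('f,'v) trm \<times> ('f,'v) trm) list) (\<sigma>' :: ('f,'v) subst). card (evars E'') < card (evars E) \<Longrightarrow> unifs \<sigma>' E'' \<Longrightarrow> \<exists>\<theta>. ugood \<theta> E''"
  shows "\<exists>\<theta>. ugood \<theta> E"
proof -
  have sx: "\<sigma> x = tsubst \<sigma> t" and uE': "unifs \<sigma> E'" using eqv un by auto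
  have xt: "x \<notin> tvars t"
    using occurs_size[of x t \<sigma>] sx ne by auto
  define \<sigma>x :: "('f,'v) subst" where "\<sigma>x = Var(x := t)"
  define E'' where "E'' = map (\<lambda>(a,b). (tsubst \<sigma>x a, tsubst \<sigma>x b)) E'"
  have sxv: "tvars (\<sigma>x y) \<subseteq> insert y (tvars t)" "x \<notin> tvars (\<sigma>x y)" for y
    using xt by (auto simp: \<sigma>x_def)
  have key: "tvars (tsubst \<sigma>x a) \<subseteq> (tvars a - {x}) \<union> tvars t" for a
    unfolding tvars_tsubst using xt by (auto simp: \<sigma>x_def split: if_splits)
  have ev'': "evars E'' \<subseteq> (tvars t \<union> evars E') - {x}"
  proof
    fix z assume "z \<in> evars E''"
    then obtain a b where ab: "(a,b) \<in> set E'" "z \<in> tvars (tsubst \<sigma>x a) \<union> tvars (tsubst \<sigma>x b)"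
      by (auto simp: E''_def evars_def)
    have "tvars a \<union> tvars b \<subseteq> evars E'" using ab(1) by (auto simp: evars_def)
    then show "z \<in> (tvars t \<union> evars E') - {x}" using ab(2) key[of a] key[of b] xt by blast
  qed
  have cardlt: "card (evars E'') < card (evars E)"
  proof -
    have "evars E'' \<subset> evars E" using ev'' ev by auto
    then show ?thesis by (simp add: psubset_card_mono)
  qed
  have comp: "subst_comp \<sigma>x \<tau> = \<tau>" if "\<tau> x = tsubst \<tau> t" for \<tau>
    using that by (auto simp: subst_comp_def \<sigma>x_def)
  have unifsE'': "unifs \<tau> E''" if "unifs \<tau> E'" "\<tau> x = tsubst \<tau> t" for \<tau>
  proof -
    have "unifs (subst_comp \<sigma>x \<tau>) E'" using that comp by simp
    then show ?thesis unfolding unifs_def E''_def by auto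
  qed
  obtain \<mu> where mu: "ugood \<mu> E''" using IH[OF cardlt unifsE''[OF uE' sx]] by blast
  define \<theta> where "\<theta> = subst_comp \<sigma>x \<mu>"
  have xmu: "x \<notin> svars \<mu>" using ugoodD(4)[OF mu] ev'' by blast
  have ut: "unifs \<theta> E"
  proof -
    have "unifs \<mu> E''" using ugoodD(1)[OF mu] .
    then have "unifs (subst_comp \<sigma>x \<mu>) E'" unfolding unifs_def E''_def by auto
    moreover have "\<theta> x = tsubst \<theta> t"
      using xt by (auto simp: \<theta>_def subst_comp_def \<sigma>x_def intro!: tsubst_cong)
    ultimately show ?thesis using eqv[of \<theta>] unfolding \<theta>_def by blast
  qed
  have mg: "\<exists>\<gamma>. \<tau> = subst_comp \<theta> \<gamma>" if "unifs \<tau> E" for \<tau>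
  proof -
    have tx: "\<tau> x = tsubst \<tau> t" and "unifs \<tau> E'" using that eqv[of \<tau>] by auto
    then have "unifs \<tau> E''" using unifsE'' by auto
    then obtain \<gamma> where "\<tau> = subst_comp \<mu> \<gamma>" using ugoodD(2)[OF mu] by blast
    then have "subst_comp \<theta> \<gamma> = subst_comp \<sigma>x \<tau>" by (simp add: \<theta>_def subst_comp_assoc)
    then show ?thesis using comp[OF tx] by metis
  qed
  have idem: "subst_comp \<theta> \<theta> = \<theta>"
  proof
    fix y
    have nx: "x \<notin> tvars (\<theta> y)"
    proof -
      have "tvars (\<theta> y) \<subseteq> tvars (\<sigma>x y) \<union> svars \<mu>"
        unfolding \<theta>_def subst_comp_def by (rule tvars_tsubst_sub)
      then show ?thesis using sxv xmu by blast
    qed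
    have "tsubst \<sigma>x (\<theta> y) = tsubst Var (\<theta> y)"
      by (rule tsubst_cong) (use nx in \<open>auto simp: \<sigma>x_def\<close>)
    then have e1: "tsubst \<sigma>x (\<theta> y) = \<theta> y" by simp
    have ty: "\<theta> y = tsubst \<mu> (\<sigma>x y)" by (simp add: \<theta>_def subst_comp_def)
    have mm: "subst_comp \<mu> \<mu> = \<mu>" using ugoodD(3)[OF mu] .
    have e2: "tsubst \<mu> (\<theta> y) = \<theta> y"
      using tsubst_comp[of \<mu> \<mu> "\<sigma>x y"] unfolding mm ty[symmetric] by simp
    have th: "tsubst \<theta> u = tsubst \<mu> (tsubst \<sigma>x u)" for u unfolding \<theta>_def by (rule tsubst_comp)
    show "subst_comp \<theta> \<theta> y = \<theta> y" unfolding subst_comp_def[of \<theta> \<theta>] using th e1 e2 by simp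

  qed
  have rel: "svars \<theta> \<subseteq> evars E"
  proof
    fix z assume z: "z \<in> svars \<theta>"
    have dom: "sdom \<theta> \<subseteq> insert x (sdom \<mu>)"
      by (auto simp: sdom_def \<theta>_def subst_comp_def \<sigma>x_def)
    have smu: "svars \<mu> \<subseteq> evars E" using ugoodD(4)[OF mu] ev'' ev by blast
    have "sdom \<mu> \<subseteq> svars \<mu>" by (auto simp: svars_def)
    show "z \<in> evars E"
    proof (cases "z \<in> sdom \<theta>")
      case True then show ?thesis using dom smu \<open>sdom \<mu> \<subseteq> svars \<mu>\<close> ev by auto
    next
      case False
      then obtain y where y: "y \<in> sdom \<theta>" "z \<in> tvars (\<theta> y)" using z by (auto simp: svars_def)
      have "tvars (\<theta> y) \<subseteq> tvars (\<sigma>x y) \<union> svars \<mu>"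
        unfolding \<theta>_def subst_comp_def by (rule tvars_tsubst_sub)
      then have "z \<in> insert y (tvars t) \<union> svars \<mu>" using sxv y by blast
      then show ?thesis using y(1) dom smu \<open>sdom \<mu> \<subseteq> svars \<mu>\<close> ev by auto
    qed
  qed
  show ?thesis using ut mg idem rel unfolding ugood_def by blast
qed

lemma unify_exists:
  fixes E :: "(('f,'v) trm \<times> ('f,'v) trm) list" and \<sigma> :: "('f,'v) subst"
  shows "unifs \<sigma> E \<Longrightarrow> \<exists>\<theta>. ugood \<theta> E"
proof (induction E arbitrary: \<sigma> rule: wf_induct_rule[OF wf_inv_image[OF wf_lex_prod[OF wf_less wf_less]], of "\<lambda>E. (card (evars E), esize E)"])
  case (1 E)
  note IH = "1.IH"
  have IHc: "\<exists>\<theta>. ugood \<theta> E''" if "card (evars E'') < card (evars E)" "unifs \<sigma>' E''"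
    for E'' :: "(('f,'v) trm \<times> ('f,'v) trm) list" and \<sigma>' :: "('f,'v) subst"
    using IH[of E'' \<sigma>'] that by simp
  have IHr: "\<exists>\<theta>. ugood \<theta> E''" if "card (evars E'') \<le> card (evars E)" "esize E'' < esize E" "unifs \<sigma>' E''"
    for E'' :: "(('f,'v) trm \<times> ('f,'v) trm) list" and \<sigma>' :: "('f,'v) subst"
  proof -
    have "card (evars E'') < card (evars E) \<or> (card (evars E'') = card (evars E) \<and> esize E'' < esize E)"
      using that(1,2) by linarith
    then show ?thesis using IH[of E'' \<sigma>'] that(3) by simp
  qed
  show ?case
  proof (cases E)
    case Nil
    have "ugood Var E" using Nil by (auto simp: ugood_def unifs_def svars_def sdom_def)
    then show ?thesis by blast
  next
    case (Cons p E')
    obtain s t where p: "p = (s,t)" by (cases p)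
    show ?thesis
    proof (cases "s = t")
      case True
      have same: "unifs \<tau> E \<longleftrightarrow> unifs \<tau> E'" for \<tau> using Cons p True by (auto simp: unifs_def)
      have "evars E' \<subseteq> evars E" using Cons by (auto simp: evars_def)
      then have "card (evars E') \<le> card (evars E)" by (simp add: card_mono)
      moreover have "esize E' < esize E" using Cons p by (simp add: esize_def)
      moreover have "unifs \<sigma> E'" using "1.prems" same by blast
      ultimately have "\<exists>\<theta>. ugood \<theta> E'" by (rule IHr)
      then obtain \<theta> where th: "ugood \<theta> E'" by blast
      have "ugood \<theta> E" unfolding ugood_def same using ugoodD[OF th] \<open>evars E' \<subseteq> evars E\<close> by blast
      then show ?thesis by blast
    next
      case False
      show ?thesis
      proof (cases s)
        case (Var x)
        show ?thesis
          by (rule var_case[where x=x and t=t and E'=E', OF _ _ _ "1.prems" IHc])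
             (use Cons p Var False in \<open>simp_all add: unifs_def evars_def\<close>)
      next
        case (Fn f ss)
        show ?thesis
        proof (cases t)
          case (Var x)
          show ?thesis
            apply (rule var_case[where x=x and t=s and E'=E', OF _ _ _ "1.prems" IHc])
                apply (use Cons p Var in \<open>auto simp: unifs_def\<close>)[1]
               apply (use Cons p Var in \<open>auto simp: evars_def\<close>)[1]
              apply (use Var False in simp)
             apply assumption+
            done
        next
          case (Fn g ts)
          have "tsubst \<sigma> s = tsubst \<sigma> t" using "1.prems" Cons p by simp
          then have fg: "f = g" and mm: "map (tsubst \<sigma>) ss = map (tsubst \<sigma>) ts"
            using Fn \<open>s = Fn f ss\<close> by simp_all
          have len: "length ss = length ts" using map_eq_imp_length_eq[OF mm] .
          define E2 where "E2 = zip ss ts @ E'"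
          have same: "unifs \<tau> E \<longleftrightarrow> unifs \<tau> E2" for \<tau>
            unfolding Cons p E2_def \<open>s = Fn f ss\<close> Fn fg unifs_simps zip_facts(2)[OF len] by simp
          have ev: "evars E2 = evars E"
            unfolding Cons p E2_def \<open>s = Fn f ss\<close> Fn evars_simps zip_facts(1)[OF len] by simp
          have sz: "esize (zip ss ts) < size s + size t + 1"
            using esize_zip[OF len] unfolding \<open>s = Fn f ss\<close> Fn by simp
          have "esize E2 < esize E" using sz unfolding Cons p E2_def esize_def by simp
          moreover have u2: "unifs \<sigma> E2" using "1.prems" same[of \<sigma>] by simp
          moreover have "card (evars E2) \<le> card (evars E)" using ev by simp
          ultimately have "\<exists>\<theta>. ugood \<theta> E2" by (intro IHr[of E2 \<sigma>])
          then obtain \<theta> where th: "ugood \<theta> E2" by blast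
          have "ugood \<theta> E" unfolding ugood_def
          proof (intro conjI allI impI)
            show "unifs \<theta> E" using ugoodD(1)[OF th] same[of \<theta>] by simp
            show "subst_comp \<theta> \<theta> = \<theta>" using ugoodD(3)[OF th] .
            show "svars \<theta> \<subseteq> evars E" using ugoodD(4)[OF th] ev by simp
          next
            fix \<tau> assume "unifs \<tau> E"
            then have "unifs \<tau> E2" using same[of \<tau>] by simp
            then show "\<exists>\<gamma>. \<tau> = subst_comp \<theta> \<gamma>" using ugoodD(2)[OF th] by blast
          qed
          then show ?thesis by blast
        qed
      qed
    qed
  qed
qed

lemma rmgu_exists:
  assumes "unifier \<sigma> ss ts" shows "\<exists>\<theta>. rmgu \<theta> ss ts"
proof -
  have len: "length ss = length ts" using assms map_eq_imp_length_eq unfolding unifier_def by blast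
  have eq: "unifier \<tau> ss ts \<longleftrightarrow> unifs \<tau> (zip ss ts)" for \<tau>
    using zip_facts(2)[OF len] by (simp add: unifier_def)
  have ev: "evars (zip ss ts) = (\<Union>t\<in>set ss \<union> set ts. tvars t)"
    using zip_facts(1)[OF len] .
  obtain \<theta> where th: "ugood \<theta> (zip ss ts)" using unify_exists assms eq by blast
  have "rmgu \<theta> ss ts" unfolding rmgu_def mgu_def eq ev[symmetric] using ugoodD[OF th] by blast
  then show ?thesis by blast
qed




lemma finite_avars[simp]: "finite (avars a)" by (cases a) auto
lemma finite_gvars[simp]: "finite (gvars G)" by (induction G) auto
lemma finite_cvars[simp]: "finite (cvars C)" by (auto simp: cvars_def)

lemma asubst_EqD: "asubst \<sigma> a = Eq u v \<Longrightarrow> \<exists>s t. a = Eq s t \<and> u = tsubst \<sigma> s \<and> v = tsubst \<sigma> t"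
  by (cases a) auto
lemma asubst_NeqD: "asubst \<sigma> a = Neq u v \<Longrightarrow> \<exists>s t. a = Neq s t \<and> u = tsubst \<sigma> s \<and> v = tsubst \<sigma> t"
  by (cases a) auto
lemma asubst_PredD: "asubst \<sigma> a = Pred p us \<Longrightarrow> \<exists>ts. a = Pred p ts \<and> us = map (tsubst \<sigma>) ts"
  by (cases a) auto
lemma nonbasic_asubst[simp]: "nonbasic (asubst \<sigma> a) = nonbasic a" by (cases a) auto
lemma is_eq_asubst[simp]: "is_eq (asubst \<sigma> a) = is_eq a" by (cases a) auto

lemma ground_tsubst_ground: "ground t \<Longrightarrow> ground (tsubst \<sigma> t)"
  by (simp add: ground_def ground_tsubst)

lemma satisfies_asubst: "satisfies M a \<Longrightarrow> satisfies M (asubst \<sigma> a)"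
  by (cases a) (auto intro: ground_tsubst_ground)

lemma map_decomp:
  "map f xs = A @ b # B \<Longrightarrow> \<exists>A0 b0 B0. xs = A0 @ b0 # B0 \<and> A = map f A0 \<and> b = f b0 \<and> B = map f B0"
  by (auto simp: map_eq_append_conv map_eq_Cons_conv)

lemma append_decomp:
  "xs @ ys = A @ b # B \<Longrightarrow> (\<exists>B1. xs = A @ b # B1 \<and> B = B1 @ ys) \<or> (\<exists>A2. ys = A2 @ b # B \<and> A = xs @ A2)"
proof (induction xs arbitrary: A)
  case Nil then show ?case by auto
next
  case (Cons x xs)
  show ?case
  proof (cases A)
    case Nil then show ?thesis using Cons.prems by auto
  next
    case (Cons a A')
    then have "xs @ ys = A' @ b # B" "x = a" using Cons.prems by auto
    from Cons.IH[OF this(1)] show ?thesis using Cons \<open>x = a\<close> by auto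
  qed
qed

definition eqs_unif :: "('f,'v) subst \<Rightarrow> ('p,'f,'v) goal \<Rightarrow> bool" where
  "eqs_unif \<gamma> E \<longleftrightarrow> (\<forall>a\<in>set E. \<forall>u v. a = Eq u v \<longrightarrow> tsubst \<gamma> u = tsubst \<gamma> v)"

lemma eqs_unif_simps[simp]:
  "eqs_unif \<gamma> [] "
  "eqs_unif \<gamma> (Eq s t # E) \<longleftrightarrow> tsubst \<gamma> s = tsubst \<gamma> t \<and> eqs_unif \<gamma> E"
  by (auto simp: eqs_unif_def)

lemma eqs_unif_comp: "eqs_unif \<gamma> E \<Longrightarrow> eqs_unif (subst_comp \<gamma> \<delta>) E"
  by (auto simp: eqs_unif_def)

lemma eqs_unif_gsubst: "eqs_unif \<tau> (gsubst \<theta> E) \<longleftrightarrow> eqs_unif (subst_comp \<theta> \<tau>) E"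
proof (induction E)
  case Nil then show ?case by simp
next
  case (Cons a E)
  have "eqs_unif \<tau> (gsubst \<theta> (a # E)) \<longleftrightarrow> eqs_unif \<tau> [asubst \<theta> a] \<and> eqs_unif \<tau> (gsubst \<theta> E)"
    by (auto simp: eqs_unif_def)
  moreover have "eqs_unif (subst_comp \<theta> \<tau>) (a # E) \<longleftrightarrow> eqs_unif (subst_comp \<theta> \<tau>) [a] \<and> eqs_unif (subst_comp \<theta> \<tau>) E"
    by (auto simp: eqs_unif_def)
  moreover have "eqs_unif \<tau> [asubst \<theta> a] \<longleftrightarrow> eqs_unif (subst_comp \<theta> \<tau>) [a]"
    by (cases a) (auto simp: eqs_unif_def)
  ultimately show ?case using Cons.IH by simp
qed

lemma eqs_unif_cong: "(\<And>x. x \<in> gvars E \<Longrightarrow> \<sigma> x = \<tau> x) \<Longrightarrow> eqs_unif \<sigma> E = eqs_unif \<tau> E"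
proof -
  assume h: "\<And>x. x \<in> gvars E \<Longrightarrow> \<sigma> x = \<tau> x"
  have sub: "tvars u \<union> tvars v \<subseteq> gvars E" if "Eq u v \<in> set E" for u v
    using that unfolding gvars_def by (metis UN_upper avars.simps(1))
  have "tsubst \<sigma> u = tsubst \<tau> u" if "Eq u v \<in> set E" for u v
    using sub[OF that] h by (intro tsubst_cong) blast
  moreover have "tsubst \<sigma> v = tsubst \<tau> v" if "Eq u v \<in> set E" for u v
    using sub[OF that] h by (intro tsubst_cong) blast
  ultimately show ?thesis unfolding eqs_unif_def by metis
qed

lemma unifier_single: "unifier \<sigma> [s] [t] \<longleftrightarrow> tsubst \<sigma> s = tsubst \<sigma> t"
  by (simp add: unifier_def)

lemma step_EqD: "step P (Eq s t # G) X \<Longrightarrow> \<exists>\<theta>. rmgu \<theta> [s] [t] \<and> X = gsubst \<theta> G"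
  by (cases rule: step.cases) auto

lemma rmgu_unifier: "rmgu \<theta> ss ts \<Longrightarrow> unifier \<theta> ss ts"
  by (simp add: rmgu_def mgu_def)
lemma rmgu_mg: "rmgu \<theta> ss ts \<Longrightarrow> unifier \<tau> ss ts \<Longrightarrow> \<exists>\<gamma>. \<tau> = subst_comp \<theta> \<gamma>"
  by (simp add: rmgu_def mgu_def)
lemma rmgu_rel: "rmgu \<theta> ss ts \<Longrightarrow> svars \<theta> \<subseteq> (\<Union>t\<in>set ss \<union> set ts. tvars t)"
  by (simp add: rmgu_def)

lemma eqs_prefix:
  "\<forall>a\<in>set Eqs. is_eq a \<Longrightarrow> steps P (Eqs @ G) (A' # G') \<Longrightarrow> nonbasic A' \<Longrightarrow>
   \<exists>Go \<gamma>. steps P Go (A' # G') \<and> Go = gsubst \<gamma> G \<and> eqs_unif \<gamma> Eqs \<and>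
     (\<forall>\<tau>. eqs_unif \<tau> Eqs \<longrightarrow> (\<exists>\<zeta>. gsubst \<tau> G = gsubst \<zeta> Go))"
proof (induction "length Eqs" arbitrary: Eqs G)
  case 0
  then have "Eqs = []" by simp
  show ?case
    by (rule exI[of _ G], rule exI[of _ Var]) (use 0 \<open>Eqs = []\<close> in auto)
next
  case (Suc n)
  then obtain a E where Eqs: "Eqs = a # E" by (cases Eqs) auto
  note Cons = Suc[unfolded Eqs]
  have lenE: "n = length (gsubst \<theta>' E)" for \<theta>' using Suc(2) Eqs by (simp add: gsubst_def)
  obtain s t where a: "a = Eq s t" using Cons(3) by (cases a) auto
  have "Eq s t # (E @ G) \<noteq> A' # G'" using Cons(5) a by auto
  then obtain X where st: "step P (Eq s t # (E @ G)) X" and rest: "steps P X (A' # G')"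
    using Cons(4) a by (auto elim: converse_rtranclpE)
  obtain \<theta> where th: "rmgu \<theta> [s] [t]" and X: "X = gsubst \<theta> (E @ G)" using step_EqD[OF st] by blast
  have allE: "\<forall>a\<in>set (gsubst \<theta> E). is_eq a" using Cons(3) by (auto simp: gsubst_def)
  have "steps P (gsubst \<theta> E @ gsubst \<theta> G) (A' # G')" using rest X by simp
  from Suc.hyps(1)[OF lenE allE this Cons(5)]
  obtain Go \<gamma>1 where ih: "steps P Go (A' # G')" "Go = gsubst \<gamma>1 (gsubst \<theta> G)"
    "eqs_unif \<gamma>1 (gsubst \<theta> E)" "\<forall>\<tau>. eqs_unif \<tau> (gsubst \<theta> E) \<longrightarrow> (\<exists>\<zeta>. gsubst \<tau> (gsubst \<theta> G) = gsubst \<zeta> Go)"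
    by blast
  define \<gamma> where "\<gamma> = subst_comp \<theta> \<gamma>1"
  have "Go = gsubst \<gamma> G" using ih(2) by (simp add: \<gamma>_def)
  moreover have "eqs_unif \<gamma> (a # E)"
  proof -
    have "tsubst \<theta> s = tsubst \<theta> t" using rmgu_unifier[OF th] by (simp add: unifier_single)
    then have "tsubst \<gamma> s = tsubst \<gamma> t" by (simp add: \<gamma>_def)
    moreover have "eqs_unif \<gamma> E" using ih(3) by (simp add: eqs_unif_gsubst \<gamma>_def)
    ultimately show ?thesis using a by simp
  qed
  moreover have "\<exists>\<zeta>. gsubst \<tau> G = gsubst \<zeta> Go" if "eqs_unif \<tau> (a # E)" for \<tau>
  proof -
    have "tsubst \<tau> s = tsubst \<tau> t" "eqs_unif \<tau> E" using that a by auto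
    then obtain \<zeta>' where z: "\<tau> = subst_comp \<theta> \<zeta>'" using rmgu_mg[OF th] by (auto simp: unifier_single)
    then have "eqs_unif \<zeta>' (gsubst \<theta> E)" using \<open>eqs_unif \<tau> E\<close> by (simp add: eqs_unif_gsubst)
    then obtain \<zeta> where "gsubst \<zeta>' (gsubst \<theta> G) = gsubst \<zeta> Go" using ih(4) by blast
    then show ?thesis using z by auto
  qed
  ultimately show ?case using ih(1) Eqs by blast
qed




lemma fresh_perm:
  fixes S T :: "'v::infinite set"
  assumes "finite S" "finite T"
  shows "\<exists>\<rho>. bij \<rho> \<and> \<rho> ` S \<inter> T = {}"
proof -
  have "infinite (UNIV - (S \<union> T))" using assms infinite_UNIV by (simp add: Diff_infinite_finite)
  then obtain D where D: "finite D" "card D = card S" "D \<subseteq> UNIV - (S \<union> T)"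
    using infinite_arbitrarily_large by blast
  obtain f where f: "bij_betw f S D" using finite_same_card_bij[OF assms(1) D(1)] D(2) by auto
  define \<rho> where "\<rho> x = (if x \<in> S then f x else if x \<in> D then inv_into S f x else x)" for x
  have fS: "f ` S = D" "inj_on f S" using f by (auto simp: bij_betw_def)
  have inv: "\<rho> (\<rho> x) = x" for x
  proof (cases "x \<in> S")
    case True
    then have "f x \<in> D" "f x \<notin> S" using fS D(3) by auto
    then show ?thesis using True fS by (simp add: \<rho>_def)
  next
    case False
    show ?thesis
    proof (cases "x \<in> D")
      case True
      then have "inv_into S f x \<in> S" using fS inv_into_into by metis
      then show ?thesis using False True fS f_inv_into_f[of x f S] by (simp add: \<rho>_def)
    next
      case False2: False
      then show ?thesis using False by (simp add: \<rho>_def)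
    qed
  qed
  have "bij \<rho>" by (rule o_bij[of \<rho> \<rho>]) (auto simp: inv fun_eq_iff)
  moreover have "\<rho> ` S \<inter> T = {}" using fS D(3) by (auto simp: \<rho>_def)
  ultimately show ?thesis by blast
qed

lemma tvars_rename: "tvars (tsubst (Var \<circ> \<rho>) u) = \<rho> ` tvars u"
  by (induction u) auto
lemma avars_rename: "avars (asubst (Var \<circ> \<rho>) a) = \<rho> ` avars a"
  by (cases a) (auto simp: tvars_rename)
lemma gvars_rename: "gvars (gsubst (Var \<circ> \<rho>) G) = \<rho> ` gvars G"
  by (induction G) (simp_all only: gsubst_Cons gsubst_Nil gvars_Cons gvars_Nil avars_rename image_Un image_empty)
lemma rename_simps[simp]: "hd_pred (rename_clause \<rho> C) = hd_pred C"
  "hd_args (rename_clause \<rho> C) = map (tsubst (Var \<circ> \<rho>)) (hd_args C)"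
  "bd (rename_clause \<rho> C) = gsubst (Var \<circ> \<rho>) (bd C)"
  by (simp_all add: rename_clause_def)
lemma cvars_rename: "cvars (rename_clause \<rho> C) = \<rho> ` cvars C"
  by (auto simp: cvars_def tvars_rename gvars_rename)

lemma subst_comp_rename: "subst_comp (Var \<circ> \<rho>) \<sigma> = (\<lambda>y. \<sigma> (\<rho> y))"
  by (auto simp: subst_comp_def)

lemma ren_cong:
  assumes "\<And>y. y \<in> cvars C \<Longrightarrow> \<sigma>1 (\<rho>1 y) = \<sigma>2 (\<rho>2 y)"
  shows "map (tsubst \<sigma>1) (hd_args (rename_clause \<rho>1 C)) = map (tsubst \<sigma>2) (hd_args (rename_clause \<rho>2 C))"
    "gsubst \<sigma>1 (bd (rename_clause \<rho>1 C)) = gsubst \<sigma>2 (bd (rename_clause \<rho>2 C))"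
proof -
  have t: "tsubst \<sigma> (tsubst (Var \<circ> \<rho>) u) = tsubst (\<lambda>y. \<sigma> (\<rho> y)) u" for \<sigma> \<rho> u
    using tsubst_comp[of "Var \<circ> \<rho>" \<sigma> u] by (simp add: subst_comp_rename)
  have g: "gsubst \<sigma> (gsubst (Var \<circ> \<rho>) G) = gsubst (\<lambda>y. \<sigma> (\<rho> y)) G" for \<sigma> \<rho> G
    using gsubst_comp[of "Var \<circ> \<rho>" \<sigma> G] by (simp add: subst_comp_rename)
  have "tsubst (\<lambda>y. \<sigma>1 (\<rho>1 y)) u = tsubst (\<lambda>y. \<sigma>2 (\<rho>2 y)) u" if "u \<in> set (hd_args C)" for u
    by (rule tsubst_cong) (use that assms in \<open>auto simp: cvars_def\<close>)
  then show "map (tsubst \<sigma>1) (hd_args (rename_clause \<rho>1 C)) = map (tsubst \<sigma>2) (hd_args (rename_clause \<rho>2 C))"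
    by (simp add: t)
  have "gsubst (\<lambda>y. \<sigma>1 (\<rho>1 y)) (bd C) = gsubst (\<lambda>y. \<sigma>2 (\<rho>2 y)) (bd C)"
    by (rule gsubst_cong) (use assms in \<open>auto simp: cvars_def\<close>)
  then show "gsubst \<sigma>1 (bd (rename_clause \<rho>1 C)) = gsubst \<sigma>2 (bd (rename_clause \<rho>2 C))"
    by (simp add: g)
qed

lemma input_vars_rename: "input_vars M p (map (tsubst (Var \<circ> \<rho>)) hs) = \<rho> ` input_vars M p hs"
  by (auto simp: input_vars_def tvars_rename split: option.splits)

lemma safe_rename:
  assumes "safe_clause M C" "bij \<rho>"
  shows "safe_clause M (rename_clause \<rho> C)"
  unfolding safe_clause_def
proof (intro allI impI ballI)
  fix A s t B X
  assume dec: "bd (rename_clause \<rho> C) = A @ Neq s t # B" and X: "X \<in> tvars s \<union> tvars t"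
  from dec have "map (asubst (Var \<circ> \<rho>)) (bd C) = A @ Neq s t # B" by (simp add: gsubst_def)
  from map_decomp[OF this] obtain A0 b0 B0 where d: "bd C = A0 @ b0 # B0"
    "A = gsubst (Var \<circ> \<rho>) A0" "Neq s t = asubst (Var \<circ> \<rho>) b0" "B = gsubst (Var \<circ> \<rho>) B0"
    by (auto simp: gsubst_def)
  from asubst_NeqD[OF d(3)[symmetric]] obtain s0 t0 where b0: "b0 = Neq s0 t0"
    "s = tsubst (Var \<circ> \<rho>) s0" "t = tsubst (Var \<circ> \<rho>) t0" by blast
  from X obtain X0 where X0: "X = \<rho> X0" "X0 \<in> tvars s0 \<union> tvars t0" using b0 by (auto simp: tvars_rename)
  have inj: "inj \<rho>" using assms(2) bij_is_inj by auto
  from assms(1) d(1) b0(1) X0(2)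
  have "X0 \<in> input_vars M (hd_pred C) (hd_args C) \<or>
        X0 \<notin> (\<Union>u\<in>set (hd_args C). tvars u) \<union> gvars A0 \<union> gvars B0"
    unfolding safe_clause_def by blast
  then show "X \<in> input_vars M (hd_pred (rename_clause \<rho> C)) (hd_args (rename_clause \<rho> C)) \<or>
       X \<notin> (\<Union>u\<in>set (hd_args (rename_clause \<rho> C)). tvars u) \<union> gvars A \<union> gvars B"
  proof
    assume "X0 \<in> input_vars M (hd_pred C) (hd_args C)"
    then show ?thesis using X0(1) input_vars_rename[of M "hd_pred C" \<rho> "hd_args C"] by auto
  next
    assume n: "X0 \<notin> (\<Union>u\<in>set (hd_args C). tvars u) \<union> gvars A0 \<union> gvars B0"
    have "(\<Union>u\<in>set (hd_args (rename_clause \<rho> C)). tvars u) \<union> gvars A \<union> gvars B =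
          \<rho> ` ((\<Union>u\<in>set (hd_args C). tvars u) \<union> gvars A0 \<union> gvars B0)"
      using d by (auto simp: tvars_rename gvars_rename)
    then show ?thesis using n X0(1) inj by (simp add: inj_image_mem_iff)
  qed
qed

lemma input_ground:
  assumes "satisfies M (Pred p ts)" "map (tsubst \<theta>) ts = map (tsubst \<theta>) hs" "X \<in> input_vars M p hs"
  shows "tvars (\<theta> X) = {}"
proof -
  have len: "length ts = length hs" using assms(2) map_eq_imp_length_eq by blast
  obtain ms where ms: "M (p, length ts) = Some ms" "\<forall>i<length ts. ms ! i \<longrightarrow> ground (ts ! i)"
    using assms(1) by auto
  from assms(3) ms(1) len obtain i where i: "i < length hs" "ms ! i" "X \<in> tvars (hs ! i)"
    by (auto simp: input_vars_def)
  have "tsubst \<theta> (hs ! i) = tsubst \<theta> (ts ! i)" using assms(2) i(1) len by (metis nth_map)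
  also have "\<dots> = ts ! i" using ms(2) i len by (simp add: ground_def ground_tsubst)
  finally have "tvars (tsubst \<theta> (hs ! i)) = {}" using ms(2) i len by (simp add: ground_def)
  then show ?thesis using i(3) by (auto simp: tvars_tsubst)
qed

definition neq_local :: "('p,'f,'v) goal \<Rightarrow> ('p,'f,'v) goal \<Rightarrow> bool" where
  "neq_local X R \<longleftrightarrow> (\<forall>A s t B. X = A @ Neq s t # B \<longrightarrow> (tvars s \<union> tvars t) \<inter> gvars (A @ B @ R) = {})"

lemma nl_main:
  assumes "\<And>A s t B. X = A @ Neq s t # B \<Longrightarrow>
    (tvars (tsubst \<theta> s) \<union> tvars (tsubst \<theta> t)) \<inter> gvars (gsubst \<theta> (A @ B @ R)) = {}"
  shows "neq_local (gsubst \<theta> X) (gsubst \<theta> R)"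
  unfolding neq_local_def
proof (intro allI impI)
  fix A s t B assume "gsubst \<theta> X = A @ Neq s t # B"
  then have "map (asubst \<theta>) X = A @ Neq s t # B" by (simp add: gsubst_def)
  from map_decomp[OF this] obtain A0 b0 B0 where d: "X = A0 @ b0 # B0" "A = map (asubst \<theta>) A0"
    "Neq s t = asubst \<theta> b0" "B = map (asubst \<theta>) B0" by blast
  from asubst_NeqD[OF d(3)[symmetric]] obtain s0 t0 where "b0 = Neq s0 t0" "s = tsubst \<theta> s0" "t = tsubst \<theta> t0"
    by blast
  with assms[of A0 s0 t0 B0] d show "(tvars s \<union> tvars t) \<inter> gvars (A @ B @ gsubst \<theta> R) = {}"
    by (simp add: gsubst_def)
qed

definition INVp :: "('p,'f,'v) goal \<Rightarrow> ('p,'f,'v) goal \<Rightarrow> ('p,'f,'v) goal \<Rightarrow> ('f,'v) subst \<Rightarrow> ('p,'f,'v) goal \<Rightarrow> bool" where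
  "INVp X E Y \<gamma> Go \<longleftrightarrow> (\<forall>a\<in>set E. is_eq a) \<and> Go = gsubst \<gamma> (X @ Y) \<and> eqs_unif \<gamma> E \<and>
     (\<forall>\<tau>. eqs_unif \<tau> E \<longrightarrow> (\<exists>\<zeta>. gsubst \<tau> (X @ Y) = gsubst \<zeta> Go)) \<and> (E = [] \<or> neq_local X (E @ Y))"

lemma INVpD:
  assumes "INVp X E Y \<gamma> Go"
  shows "\<forall>a\<in>set E. is_eq a" "Go = gsubst \<gamma> (X @ Y)" "eqs_unif \<gamma> E"
    "\<And>\<tau>. eqs_unif \<tau> E \<Longrightarrow> \<exists>\<zeta>. gsubst \<tau> (X @ Y) = gsubst \<zeta> Go" "E \<noteq> [] \<Longrightarrow> neq_local X (E @ Y)"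
  using assms unfolding INVp_def by blast+

lemma drain:
  "INVp [] E Y \<gamma> Go \<Longrightarrow> \<exists>Y' \<gamma>'. steps P (E @ Y) Y' \<and> INVp Y' [] [] \<gamma>' Go"
proof (induction "length E" arbitrary: E Y \<gamma>)
  case 0
  then have "E = []" by simp
  then show ?case using 0 by (intro exI[of _ Y] exI[of _ \<gamma>]) (auto simp: INVp_def)
next
  case (Suc n)
  then obtain a E1 where E: "E = a # E1" by (cases E) auto
  have inv: "INVp [] (a # E1) Y \<gamma> Go" using Suc(3) E by simp
  then obtain s t where a: "a = Eq s t" unfolding INVp_def by (cases a) auto
  note D = INVpD[OF inv[unfolded a]]
  have allE: "\<forall>b\<in>set E1. is_eq b" using D(1) by simp
  have Go: "Go = gsubst \<gamma> Y" using D(2) by simp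
  have eu: "tsubst \<gamma> s = tsubst \<gamma> t" "eqs_unif \<gamma> E1" using D(3) by simp_all
  have "unifier \<gamma> [s] [t]" using eu by (simp add: unifier_single)
  then obtain \<theta> where th: "rmgu \<theta> [s] [t]" using rmgu_exists by blast
  obtain \<eta> where eta: "\<gamma> = subst_comp \<theta> \<eta>" using rmgu_mg[OF th \<open>unifier \<gamma> [s] [t]\<close>] by blast
  have st: "step P (Eq s t # E1 @ Y) (gsubst \<theta> (E1 @ Y))" by (rule eq_step[OF th])
  have inv2: "INVp [] (gsubst \<theta> E1) (gsubst \<theta> Y) \<eta> Go"
    unfolding INVp_def
  proof (intro conjI allI impI)
    show "\<forall>b\<in>set (gsubst \<theta> E1). is_eq b" using allE by (auto simp: gsubst_def)
    show "Go = gsubst \<eta> ([] @ gsubst \<theta> Y)" using Go eta by simp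
    show "eqs_unif \<eta> (gsubst \<theta> E1)" using eu eta by (simp add: eqs_unif_gsubst)
    show "gsubst \<theta> E1 = [] \<or> neq_local [] (gsubst \<theta> E1 @ gsubst \<theta> Y)" by (auto simp: neq_local_def)
  next
    fix \<tau> assume "eqs_unif \<tau> (gsubst \<theta> E1)"
    then have "eqs_unif (subst_comp \<theta> \<tau>) E1" by (simp add: eqs_unif_gsubst)
    moreover have "tsubst (subst_comp \<theta> \<tau>) s = tsubst (subst_comp \<theta> \<tau>) t"
      using rmgu_unifier[OF th] by (simp add: unifier_single)
    ultimately obtain \<zeta> where "gsubst (subst_comp \<theta> \<tau>) Y = gsubst \<zeta> Go" using D(4)[of "subst_comp \<theta> \<tau>"] by auto
    then show "\<exists>\<zeta>. gsubst \<tau> ([] @ gsubst \<theta> Y) = gsubst \<zeta> Go" by auto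
  qed
  have "n = length (gsubst \<theta> E1)" using Suc(2) E by (simp add: gsubst_def)
  from Suc(1)[OF this inv2] obtain Y' \<gamma>' where "steps P (gsubst \<theta> E1 @ gsubst \<theta> Y) Y'" "INVp Y' [] [] \<gamma>' Go"
    by blast
  then show ?case using st E a by (auto intro: converse_rtranclp_into_rtranclp)
qed

lemma normalize:
  assumes inv: "INVp X E Y \<gamma> Go" and ne: "Go \<noteq> []"
  shows "\<exists>a Xr E' Y' \<gamma>'. steps P (X @ E @ Y) ((a # Xr) @ E' @ Y') \<and> INVp (a # Xr) E' Y' \<gamma>' Go"
proof (cases X)
  case (Cons a Xr)
  then show ?thesis using inv by blast
next
  case Nil
  from drain[OF inv[unfolded Nil]] obtain Y' \<gamma>' where d: "steps P (E @ Y) Y'" "INVp Y' [] [] \<gamma>' Go" by blast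
  then have "Y' \<noteq> []" using ne by (auto simp: INVp_def)
  then obtain a Xr where "Y' = a # Xr" by (cases Y') auto
  then show ?thesis using d Nil
    by (intro exI[of _ a] exI[of _ Xr] exI[of _ "[]"] exI[of _ "[]"] exI[of _ \<gamma>']) auto
qed




lemma map_tsubst_comp: "map (tsubst (subst_comp \<sigma> \<tau>)) xs = map (tsubst \<tau>) (map (tsubst \<sigma>) xs)"
  by simp

lemma case_eq:
  assumes inv: "INVp (a # Xr) E Y \<gamma> Go" and Go: "Go = Eq so to # Gr" and Go2: "Go2 = gsubst \<theta>o Gr"
    and tho: "rmgu \<theta>o [so] [to]"
  shows "\<exists>X' E' Y' \<gamma>'. step P (a # Xr @ E @ Y) (X' @ E' @ Y') \<and> INVp X' E' Y' \<gamma>' Go2"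
proof -
  note D = INVpD[OF inv]
  have D4: "\<And>\<tau>. eqs_unif \<tau> E \<Longrightarrow> \<exists>\<zeta>. gsubst \<tau> (a # Xr @ Y) = gsubst \<zeta> Go" using D(4) by simp
  from Go D(2) have "asubst \<gamma> a = Eq so to" and Gr: "Gr = gsubst \<gamma> (Xr @ Y)" by auto
  then obtain s t where a: "a = Eq s t" and so: "so = tsubst \<gamma> s" and to: "to = tsubst \<gamma> t"
    using asubst_EqD by blast
  have u: "unifier (subst_comp \<gamma> \<theta>o) [s] [t]"
    using rmgu_unifier[OF tho] so to by (simp add: unifier_single)
  obtain \<theta>l where thl: "rmgu \<theta>l [s] [t]" using rmgu_exists[OF u] by blast
  obtain \<eta> where eta: "subst_comp \<gamma> \<theta>o = subst_comp \<theta>l \<eta>" using rmgu_mg[OF thl u] by blast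
  have stp: "step P (a # Xr @ E @ Y) (gsubst \<theta>l Xr @ gsubst \<theta>l E @ gsubst \<theta>l Y)"
    using eq_step[OF thl, of P "Xr @ E @ Y"] a by simp
  have "INVp (gsubst \<theta>l Xr) (gsubst \<theta>l E) (gsubst \<theta>l Y) \<eta> Go2"
    unfolding INVp_def
  proof (intro conjI allI impI)
    show "\<forall>b\<in>set (gsubst \<theta>l E). is_eq b" using D(1) by (auto simp: gsubst_def)
    have "Go2 = gsubst (subst_comp \<gamma> \<theta>o) (Xr @ Y)" using Go2 Gr by simp
    then show "Go2 = gsubst \<eta> (gsubst \<theta>l Xr @ gsubst \<theta>l Y)" unfolding eta by simp
    have "eqs_unif (subst_comp \<theta>l \<eta>) E" using eqs_unif_comp[OF D(3), of \<theta>o] unfolding eta .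
    then show "eqs_unif \<eta> (gsubst \<theta>l E)" by (simp add: eqs_unif_gsubst)
  next
    fix \<tau> assume "eqs_unif \<tau> (gsubst \<theta>l E)"
    then have "eqs_unif (subst_comp \<theta>l \<tau>) E" by (simp add: eqs_unif_gsubst)
    then obtain \<zeta>0 where z0: "gsubst (subst_comp \<theta>l \<tau>) (a # Xr @ Y) = gsubst \<zeta>0 Go" using D4 by blast
    then have h1: "tsubst \<zeta>0 so = tsubst \<tau> (tsubst \<theta>l s)" "tsubst \<zeta>0 to = tsubst \<tau> (tsubst \<theta>l t)"
      and h2: "gsubst \<zeta>0 Gr = gsubst \<tau> (gsubst \<theta>l (Xr @ Y))" using Go a by auto
    have "tsubst \<theta>l s = tsubst \<theta>l t" using rmgu_unifier[OF thl] by (simp add: unifier_single)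
    then have "unifier \<zeta>0 [so] [to]" using h1 by (simp add: unifier_single)
    then obtain \<zeta> where "\<zeta>0 = subst_comp \<theta>o \<zeta>" using rmgu_mg[OF tho] by blast
    then have "gsubst \<tau> (gsubst \<theta>l Xr @ gsubst \<theta>l Y) = gsubst \<zeta> Go2" using h2 Go2 by simp
    then show "\<exists>\<zeta>. gsubst \<tau> (gsubst \<theta>l Xr @ gsubst \<theta>l Y) = gsubst \<zeta> Go2" by blast
  next
    show "gsubst \<theta>l E = [] \<or> neq_local (gsubst \<theta>l Xr) (gsubst \<theta>l E @ gsubst \<theta>l Y)"
    proof (cases "E = []")
      case True then show ?thesis by simp
    next
      case False
      then have nl: "neq_local (a # Xr) (E @ Y)" using D(5) by blast
      have sv: "svars \<theta>l \<subseteq> avars a" using rmgu_rel[OF thl] a by auto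
      have "neq_local (gsubst \<theta>l Xr) (gsubst \<theta>l (E @ Y))"
      proof (rule nl_main)
        fix A s' t' B assume d: "Xr = A @ Neq s' t' # B"
        have "a # Xr = (a # A) @ Neq s' t' # B" using d by simp
        then have disj: "(tvars s' \<union> tvars t') \<inter> gvars ((a # A) @ B @ E @ Y) = {}"
          using nl unfolding neq_local_def by blast
        then have fx: "tsubst \<theta>l s' = s'" "tsubst \<theta>l t' = t'" using sv by (auto intro!: tsubst_fix)
        have "gvars (gsubst \<theta>l (A @ B @ E @ Y)) \<subseteq> gvars (A @ B @ E @ Y) \<union> svars \<theta>l"
          by (rule gvars_gsubst_sub)
        then have G: "gvars (gsubst \<theta>l (A @ B @ E @ Y)) \<subseteq> gvars ((a # A) @ B @ E @ Y)"
          using sv by auto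
        show "(tvars (tsubst \<theta>l s') \<union> tvars (tsubst \<theta>l t')) \<inter> gvars (gsubst \<theta>l (A @ B @ E @ Y)) = {}"
          unfolding fx using disj G by blast
      qed
      then show ?thesis by simp
    qed
  qed
  then show ?thesis using stp by blast
qed

lemma case_neq:
  assumes inv: "INVp (a # Xr) E Y \<gamma> Go" and Go: "Go = Neq so to # Gr" and Go2: "Go2 = Gr"
    and nu: "\<not> unifiable [so] [to]"
  shows "\<exists>X' E' Y' \<gamma>'. step P (a # Xr @ E @ Y) (X' @ E' @ Y') \<and> INVp X' E' Y' \<gamma>' Go2"
proof -
  note D = INVpD[OF inv]
  have D4: "\<And>\<tau>. eqs_unif \<tau> E \<Longrightarrow> \<exists>\<zeta>. gsubst \<tau> (a # Xr @ Y) = gsubst \<zeta> Go" using D(4) by simp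
  from Go D(2) have "asubst \<gamma> a = Neq so to" and Gr: "Gr = gsubst \<gamma> (Xr @ Y)" by auto
  then obtain s t where a: "a = Neq s t" and so: "so = tsubst \<gamma> s" and to: "to = tsubst \<gamma> t"
    using asubst_NeqD by blast
  have nu': "\<not> unifiable [s] [t]"
  proof
    assume "unifiable [s] [t]"
    then obtain \<sigma> where \<sigma>: "tsubst \<sigma> s = tsubst \<sigma> t" by (auto simp: unifiable_def unifier_single)
    obtain \<tau> where \<tau>: "eqs_unif \<tau> E" "tsubst \<tau> s = tsubst \<tau> t"
    proof (cases "E = []")
      case True then show ?thesis using that[of \<sigma>] \<sigma> by simp
    next
      case False
      then have nl: "neq_local (a # Xr) (E @ Y)" using D(5) by blast
      have "a # Xr = [] @ Neq s t # Xr" using a by simp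
      then have disj: "(tvars s \<union> tvars t) \<inter> gvars ([] @ Xr @ E @ Y) = {}"
        using nl unfolding neq_local_def by blast
      define \<tau> where "\<tau> = (\<lambda>x. if x \<in> tvars s \<union> tvars t then \<sigma> x else \<gamma> x)"
      have "eqs_unif \<tau> E = eqs_unif \<gamma> E" by (rule eqs_unif_cong) (use disj in \<open>auto simp: \<tau>_def\<close>)
      moreover have "tsubst \<tau> s = tsubst \<sigma> s" "tsubst \<tau> t = tsubst \<sigma> t"
        by (auto simp: \<tau>_def intro!: tsubst_cong)
      ultimately show ?thesis using that[of \<tau>] D(3) \<sigma> by simp
    qed
    then obtain \<zeta> where "gsubst \<tau> (a # Xr @ Y) = gsubst \<zeta> Go" using D4 by blast
    then have "tsubst \<zeta> so = tsubst \<zeta> to" using Go a \<tau>(2) by auto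
    then show False using nu by (auto simp: unifiable_def unifier_single)
  qed
  have stp: "step P (a # Xr @ E @ Y) (Xr @ E @ Y)" using neq_step[OF nu'] a by simp
  have "INVp Xr E Y \<gamma> Go2" unfolding INVp_def
  proof (intro conjI allI impI)
    show "\<forall>b\<in>set E. is_eq b" using D(1) .
    show "Go2 = gsubst \<gamma> (Xr @ Y)" using Gr Go2 by simp
    show "eqs_unif \<gamma> E" using D(3) .
  next
    fix \<tau> assume "eqs_unif \<tau> E"
    then obtain \<zeta> where "gsubst \<tau> (a # Xr @ Y) = gsubst \<zeta> Go" using D4 by blast
    then show "\<exists>\<zeta>. gsubst \<tau> (Xr @ Y) = gsubst \<zeta> Go2" using Go Go2 by auto
  next
    show "E = [] \<or> neq_local Xr (E @ Y)"
    proof (cases "E = []")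
      case False
      then have nl: "neq_local (a # Xr) (E @ Y)" using D(5) by blast
      have "neq_local Xr (E @ Y)" unfolding neq_local_def
      proof (intro allI impI)
        fix A s' t' B assume "Xr = A @ Neq s' t' # B"
        then have "a # Xr = (a # A) @ Neq s' t' # B" by simp
        then have "(tvars s' \<union> tvars t') \<inter> gvars ((a # A) @ B @ E @ Y) = {}"
          using nl unfolding neq_local_def by blast
        then show "(tvars s' \<union> tvars t') \<inter> gvars (A @ B @ E @ Y) = {}" by auto
      qed
      then show ?thesis by simp
    qed simp
  qed
  then show ?thesis using stp by blast
qed




lemma hd_vars_cvars: "(\<Union>u\<in>set (hd_args C). tvars u) \<subseteq> cvars C" by (auto simp: cvars_def)
lemma bd_vars_cvars: "gvars (bd C) \<subseteq> cvars C" by (auto simp: cvars_def)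

lemma case_pred:
  fixes P :: "('p,'f,'v::infinite) program"
  assumes safe: "safe M P" and inv: "INVp (a # Xr) E Y \<gamma> Go"
    and Go: "Go = Pred p tso # Gr" and Go2: "Go2 = gsubst \<theta>o (bd C'o @ Gr)"
    and C: "C \<in> P" and \<rho>o: "bij \<rho>o" and C'o: "C'o = rename_clause \<rho>o C"
    and fresh_o: "cvars C'o \<inter> gvars (Pred p tso # Gr) = {}" and hp: "hd_pred C'o = p"
    and tho: "rmgu \<theta>o tso (hd_args C'o)"
    and sat: "satisfies M a"
  shows "\<exists>X' E' Y' \<gamma>'. step P (a # Xr @ E @ Y) (X' @ E' @ Y') \<and> INVp X' E' Y' \<gamma>' Go2"
proof -
  note D = INVpD[OF inv]
  have D4: "\<And>\<tau>. eqs_unif \<tau> E \<Longrightarrow> \<exists>\<zeta>. gsubst \<tau> (a # Xr @ Y) = gsubst \<zeta> Go" using D(4) by simp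
  from Go D(2) have ap: "asubst \<gamma> a = Pred p tso" and Gr: "Gr = gsubst \<gamma> (Xr @ Y)" by auto
  obtain ts where a: "a = Pred p ts" and tso: "tso = map (tsubst \<gamma>) ts"
    using asubst_PredD[OF ap] by blast
  define Gl where "Gl = a # Xr @ E @ Y"
  obtain \<rho>l where \<rho>l: "bij \<rho>l" and fr: "\<rho>l ` cvars C \<inter> gvars Gl = {}"
    using fresh_perm[OF finite_cvars[of C] finite_gvars[of Gl]] by blast
  define C'l where "C'l = rename_clause \<rho>l C"
  have cv_l: "cvars C'l = \<rho>l ` cvars C" by (simp add: C'l_def cvars_rename)
  have frl: "cvars C'l \<inter> gvars Gl = {}" using fr cv_l by simp
  define \<gamma>c where "\<gamma>c = (\<lambda>x. if x \<in> cvars C'l then Var (\<rho>o (inv \<rho>l x)) else \<gamma> x)"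
  have \<gamma>c_Gl: "\<gamma>c x = \<gamma> x" if "x \<in> gvars Gl" for x using frl that by (auto simp: \<gamma>c_def)
  have ren: "\<gamma>c (\<rho>l y) = Var (\<rho>o y)" if "y \<in> cvars C" for y
    using that \<rho>l cv_l by (auto simp: \<gamma>c_def bij_is_inj)
  have hd_eq: "map (tsubst \<gamma>c) (hd_args C'l) = hd_args C'o"
    using ren_cong(1)[of C \<gamma>c \<rho>l Var \<rho>o] ren by (simp add: C'l_def C'o)
  have bd_eq: "gsubst \<gamma>c (bd C'l) = bd C'o"
    using ren_cong(2)[of C \<gamma>c \<rho>l Var \<rho>o] ren by (simp add: C'l_def C'o)
  have ts_eq: "map (tsubst \<gamma>c) ts = tso"
  proof -
    have "tsubst \<gamma>c u = tsubst \<gamma> u" if "u \<in> set ts" for u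
      by (rule tsubst_cong) (use that in \<open>auto simp: Gl_def a intro!: \<gamma>c_Gl\<close>)
    then show ?thesis using tso by simp
  qed
  have Xr_eq: "gsubst \<gamma>c Xr = gsubst \<gamma> Xr" by (rule gsubst_cong) (auto simp: Gl_def intro!: \<gamma>c_Gl)
  have Y_eq: "gsubst \<gamma>c Y = gsubst \<gamma> Y" by (rule gsubst_cong) (auto simp: Gl_def intro!: \<gamma>c_Gl)
  have E_eq: "eqs_unif \<gamma>c E = eqs_unif \<gamma> E" by (rule eqs_unif_cong) (auto simp: Gl_def intro!: \<gamma>c_Gl)
  have u: "unifier (subst_comp \<gamma>c \<theta>o) ts (hd_args C'l)"
    using rmgu_unifier[OF tho] unfolding unifier_def map_tsubst_comp ts_eq hd_eq .
  obtain \<theta>l where thl: "rmgu \<theta>l ts (hd_args C'l)" using rmgu_exists[OF u] by blast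
  obtain \<eta> where eta: "subst_comp \<gamma>c \<theta>o = subst_comp \<theta>l \<eta>" using rmgu_mg[OF thl u] by blast
  have hpl: "hd_pred C'l = p" using hp by (simp add: C'l_def C'o)
  have frl': "cvars C'l \<inter> gvars (Pred p ts # Xr @ E @ Y) = {}" using frl by (simp add: Gl_def a)
  have stp0: "step P (Pred p ts # Xr @ E @ Y) (gsubst \<theta>l (bd C'l @ Xr @ E @ Y))"
    by (rule pred_step[OF C \<rho>l C'l_def frl' hpl thl])
  have stp: "step P (a # Xr @ E @ Y) (gsubst \<theta>l (bd C'l @ Xr) @ gsubst \<theta>l E @ gsubst \<theta>l Y)"
    using stp0 a by simp
  have svl: "svars \<theta>l \<subseteq> avars a \<union> cvars C'l"
    using rmgu_rel[OF thl] hd_vars_cvars[of C'l] a by auto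
  have "INVp (gsubst \<theta>l (bd C'l @ Xr)) (gsubst \<theta>l E) (gsubst \<theta>l Y) \<eta> Go2"
    unfolding INVp_def
  proof (intro conjI allI impI)
    show "\<forall>b\<in>set (gsubst \<theta>l E). is_eq b" using D(1) by (auto simp: gsubst_def)
    have "Go2 = gsubst \<theta>o (gsubst \<gamma>c (bd C'l @ Xr @ Y))" using Go2 Gr bd_eq Xr_eq Y_eq by simp
    also have "\<dots> = gsubst (subst_comp \<gamma>c \<theta>o) (bd C'l @ Xr @ Y)" by simp
    also have "\<dots> = gsubst \<eta> (gsubst \<theta>l (bd C'l @ Xr @ Y))" unfolding eta by simp
    finally show "Go2 = gsubst \<eta> (gsubst \<theta>l (bd C'l @ Xr) @ gsubst \<theta>l Y)" by simp
    have "eqs_unif (subst_comp \<gamma>c \<theta>o) E" using eqs_unif_comp[of \<gamma>c E \<theta>o] E_eq D(3) by simp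
    then show "eqs_unif \<eta> (gsubst \<theta>l E)" unfolding eta by (simp add: eqs_unif_gsubst)
  next
    fix \<tau> assume "eqs_unif \<tau> (gsubst \<theta>l E)"
    then have "eqs_unif (subst_comp \<theta>l \<tau>) E" by (simp add: eqs_unif_gsubst)
    then obtain \<zeta>0 where z0: "gsubst (subst_comp \<theta>l \<tau>) (a # Xr @ Y) = gsubst \<zeta>0 Go" using D4 by blast
    then have h1: "map (tsubst \<zeta>0) tso = map (tsubst (subst_comp \<theta>l \<tau>)) ts"
      and h2: "gsubst \<zeta>0 Gr = gsubst (subst_comp \<theta>l \<tau>) (Xr @ Y)" using Go a by auto
    define \<zeta>1 where "\<zeta>1 = (\<lambda>x. if x \<in> cvars C'o then tsubst \<tau> (\<theta>l (\<rho>l (inv \<rho>o x))) else \<zeta>0 x)"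
    have cv_o: "cvars C'o = \<rho>o ` cvars C" by (simp add: C'o cvars_rename)
    have z1_Go: "\<zeta>1 x = \<zeta>0 x" if "x \<in> gvars Go" for x using fresh_o that Go by (auto simp: \<zeta>1_def)
    have ren2: "\<zeta>1 (\<rho>o y) = subst_comp \<theta>l \<tau> (\<rho>l y)" if "y \<in> cvars C" for y
      using that \<rho>o cv_o by (auto simp: \<zeta>1_def bij_is_inj subst_comp_def)
    have hd1: "map (tsubst \<zeta>1) (hd_args C'o) = map (tsubst (subst_comp \<theta>l \<tau>)) (hd_args C'l)"
      using ren_cong(1)[of C \<zeta>1 \<rho>o "subst_comp \<theta>l \<tau>" \<rho>l] ren2 by (simp add: C'l_def C'o)
    have bd1: "gsubst \<zeta>1 (bd C'o) = gsubst (subst_comp \<theta>l \<tau>) (bd C'l)"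
      using ren_cong(2)[of C \<zeta>1 \<rho>o "subst_comp \<theta>l \<tau>" \<rho>l] ren2 by (simp add: C'l_def C'o)
    have tso1: "map (tsubst \<zeta>1) tso = map (tsubst \<zeta>0) tso"
    proof -
      have "tsubst \<zeta>1 u = tsubst \<zeta>0 u" if "u \<in> set tso" for u
        by (rule tsubst_cong) (use that in \<open>auto simp: Go intro!: z1_Go\<close>)
      then show ?thesis by simp
    qed
    have Gr1: "gsubst \<zeta>1 Gr = gsubst \<zeta>0 Gr" by (rule gsubst_cong) (auto simp: Go intro!: z1_Go)
    have "map (tsubst \<theta>l) ts = map (tsubst \<theta>l) (hd_args C'l)" using rmgu_unifier[OF thl] by (simp add: unifier_def)
    then have "map (tsubst (subst_comp \<theta>l \<tau>)) ts = map (tsubst (subst_comp \<theta>l \<tau>)) (hd_args C'l)"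
      unfolding map_tsubst_comp by simp
    then have "unifier \<zeta>1 tso (hd_args C'o)" unfolding unifier_def using tso1 h1 hd1 by simp
    then obtain \<zeta> where z: "\<zeta>1 = subst_comp \<theta>o \<zeta>" using rmgu_mg[OF tho] by blast
    have "gsubst \<zeta> Go2 = gsubst \<zeta>1 (bd C'o @ Gr)" using Go2 z by simp
    also have "\<dots> = gsubst (subst_comp \<theta>l \<tau>) (bd C'l) @ gsubst (subst_comp \<theta>l \<tau>) (Xr @ Y)"
      using bd1 Gr1 h2 by simp
    finally have "gsubst \<tau> (gsubst \<theta>l (bd C'l @ Xr) @ gsubst \<theta>l Y) = gsubst \<zeta> Go2" by simp
    then show "\<exists>\<zeta>. gsubst \<tau> (gsubst \<theta>l (bd C'l @ Xr) @ gsubst \<theta>l Y) = gsubst \<zeta> Go2" by blast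
  next
    show "gsubst \<theta>l E = [] \<or> neq_local (gsubst \<theta>l (bd C'l @ Xr)) (gsubst \<theta>l E @ gsubst \<theta>l Y)"
    proof (cases "E = []")
      case True then show ?thesis by simp
    next
      case False
      then have nl: "neq_local (a # Xr) (E @ Y)" using D(5) by blast
      have "neq_local (gsubst \<theta>l (bd C'l @ Xr)) (gsubst \<theta>l (E @ Y))"
      proof (rule nl_main)
        fix A s t B assume d: "bd C'l @ Xr = A @ Neq s t # B"
        let ?V = "tvars s \<union> tvars t"
        have gs: "gvars (gsubst \<theta>l (A @ B @ E @ Y)) \<subseteq> gvars (A @ B @ E @ Y) \<union> svars \<theta>l"
          by (rule gvars_gsubst_sub)
        from append_decomp[OF d] show "(tvars (tsubst \<theta>l s) \<union> tvars (tsubst \<theta>l t)) \<inter> gvars (gsubst \<theta>l (A @ B @ E @ Y)) = {}"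
        proof
          assume "\<exists>B1. bd C'l = A @ Neq s t # B1 \<and> B = B1 @ Xr"
          then obtain B1 where B1: "bd C'l = A @ Neq s t # B1" "B = B1 @ Xr" by blast
          have sc: "safe_clause M C'l" using safe C \<rho>l safe_rename unfolding safe_def C'l_def by blast
          have sc2: "\<forall>X\<in>?V. X \<in> input_vars M p (hd_args C'l) \<or>
                X \<notin> (\<Union>u\<in>set (hd_args C'l). tvars u) \<union> gvars A \<union> gvars B1"
            using sc B1(1) hpl unfolding safe_clause_def by blast
          have Vc: "?V \<subseteq> cvars C'l" using B1(1) bd_vars_cvars[of C'l] by auto
          have satp: "satisfies M (Pred p ts)" using sat a by simp
          have un: "map (tsubst \<theta>l) ts = map (tsubst \<theta>l) (hd_args C'l)"
            using rmgu_unifier[OF thl] by (simp add: unifier_def)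
          define L where "L = {X \<in> ?V. X \<notin> (\<Union>u\<in>set (hd_args C'l). tvars u) \<union> gvars A \<union> gvars B1}"
          have Lsv: "L \<inter> svars \<theta>l = {}"
          proof -
            have "L \<inter> avars a = {}" using Vc frl by (auto simp: L_def Gl_def)
            moreover have "svars \<theta>l \<subseteq> avars a \<union> (\<Union>u\<in>set (hd_args C'l). tvars u)"
              using rmgu_rel[OF thl] a by auto
            ultimately show ?thesis by (auto simp: L_def)
          qed
          have img: "tvars (\<theta>l X) \<subseteq> L" if "X \<in> ?V" for X
          proof (cases "X \<in> input_vars M p (hd_args C'l)")
            case True then show ?thesis using input_ground[OF satp un True] by simp
          next
            case False
            have "X \<in> input_vars M p (hd_args C'l) \<or>
                X \<notin> (\<Union>u\<in>set (hd_args C'l). tvars u) \<union> gvars A \<union> gvars B1"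
              using sc2 that by blast
            then have "X \<notin> (\<Union>u\<in>set (hd_args C'l). tvars u) \<union> gvars A \<union> gvars B1"
              using False by blast
            then have "X \<in> L" unfolding L_def using that by blast
            then have "X \<notin> svars \<theta>l" using Lsv by blast
            then have "\<theta>l X = Var X" by (rule not_svars)
            then show ?thesis using \<open>X \<in> L\<close> by simp
          qed
          have "tvars (tsubst \<theta>l s) \<union> tvars (tsubst \<theta>l t) \<subseteq> L"
            using img by (auto simp: tvars_tsubst)
          moreover have "L \<inter> gvars (A @ B @ E @ Y) = {}"
            using Vc frl B1(2) by (auto simp: L_def Gl_def)
          ultimately show ?thesis using gs Lsv by blast
        next
          assume "\<exists>A2. Xr = A2 @ Neq s t # B \<and> A = bd C'l @ A2"
          then obtain A2 where A2: "Xr = A2 @ Neq s t # B" "A = bd C'l @ A2" by blast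
          have "a # Xr = (a # A2) @ Neq s t # B" using A2 by simp
          then have disj: "?V \<inter> gvars ((a # A2) @ B @ E @ Y) = {}"
            using nl unfolding neq_local_def by blast
          have VG: "?V \<subseteq> gvars Gl" using A2(1) by (auto simp: Gl_def)
          then have Vc: "?V \<inter> cvars C'l = {}" using frl by auto
          have "?V \<inter> svars \<theta>l = {}" using svl disj Vc by auto
          then have fx: "tsubst \<theta>l s = s" "tsubst \<theta>l t = t" by (auto intro!: tsubst_fix)
          have "gvars (A @ B @ E @ Y) \<subseteq> cvars C'l \<union> gvars (A2 @ B @ E @ Y)"
            using A2(2) bd_vars_cvars[of C'l] by auto
          then have G: "gvars (gsubst \<theta>l (A @ B @ E @ Y)) \<subseteq> cvars C'l \<union> avars a \<union> gvars (A2 @ B @ E @ Y)"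
            using gs svl by blast
          have disj': "?V \<inter> (avars a \<union> gvars (A2 @ B @ E @ Y)) = {}"
            using disj by (simp only: gvars_Cons append_Cons)
          show ?thesis unfolding fx using G disj' Vc by blast
        qed
      qed
      then show ?thesis by simp
    qed
  qed
  then show ?thesis using stp by blast
qed

lemma step_cases:
  "step P Go Go2 \<Longrightarrow>
   (\<exists>\<theta> s t G. Go = Eq s t # G \<and> Go2 = gsubst \<theta> G \<and> rmgu \<theta> [s] [t]) \<or>
   (\<exists>s t G. Go = Neq s t # G \<and> Go2 = G \<and> \<not> unifiable [s] [t]) \<or>
   (\<exists>C \<rho> C' p ts G \<theta>. Go = Pred p ts # G \<and> Go2 = gsubst \<theta> (bd C' @ G) \<and> C \<in> P \<and> bij \<rho> \<and>
      C' = rename_clause \<rho> C \<and> cvars C' \<inter> gvars (Pred p ts # G) = {} \<and> hd_pred C' = p \<and>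
      rmgu \<theta> ts (hd_args C'))"
  by (cases rule: step.cases) blast+

lemma one_step:
  fixes P :: "('p,'f,'v::infinite) program"
  assumes safe: "safe M P" and inv: "INVp (a # Xr) E Y \<gamma> Go" and st: "step P Go Go2"
  shows "(nonbasic a \<and> \<not> satisfies M a) \<or>
         (\<exists>X' E' Y' \<gamma>'. step P (a # Xr @ E @ Y) (X' @ E' @ Y') \<and> INVp X' E' Y' \<gamma>' Go2)"
proof (cases "nonbasic a \<and> \<not> satisfies M a")
  case True then show ?thesis by blast
next
  case False
  from step_cases[OF st] show ?thesis
  proof (elim disjE exE conjE)
    fix \<theta> s t G assume h: "Go = Eq s t # G" "Go2 = gsubst \<theta> G" "rmgu \<theta> [s] [t]"
    show ?thesis using case_eq[OF inv h] by (rule disjI2)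
  next
    fix s t G assume h: "Go = Neq s t # G" "Go2 = G" "\<not> unifiable [s] [t]"
    show ?thesis using case_neq[OF inv h] by (rule disjI2)
  next
    fix C \<rho> C' p ts G \<theta>
    assume h: "Go = Pred p ts # G" "Go2 = gsubst \<theta> (bd C' @ G)" "C \<in> P" "bij \<rho>"
      "C' = rename_clause \<rho> C" "cvars C' \<inter> gvars (Pred p ts # G) = {}" "hd_pred C' = p"
      "rmgu \<theta> ts (hd_args C')"
    have "asubst \<gamma> a = Pred p ts" using h(1) INVpD(2)[OF inv] by simp
    then have "nonbasic a" by (cases a) auto
    then have "satisfies M a" using False by blast
    show ?thesis using case_pred[OF safe inv h \<open>satisfies M a\<close>] by (rule disjI2)
  qed
qed

lemma main:
  fixes P :: "('p,'f,'v::infinite) program"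
  assumes safe: "safe M P"
  shows "steps P Go (A' # G') \<Longrightarrow> nonbasic A' \<Longrightarrow> \<not> satisfies M A' \<Longrightarrow> INVp X E Y \<gamma> Go \<Longrightarrow>
    \<exists>A'' G''. nonbasic A'' \<and> \<not> satisfies M A'' \<and> steps P (X @ E @ Y) (A'' # G'')"
proof (induction Go arbitrary: X E Y \<gamma> rule: converse_rtranclp_induct)
  case base
  from normalize[OF base(3)] obtain a Xr E' Y' \<gamma>' where
    n: "steps P (X @ E @ Y) ((a # Xr) @ E' @ Y')" "INVp (a # Xr) E' Y' \<gamma>' (A' # G')" by blast
  have "asubst \<gamma>' a = A'" using INVpD(2)[OF n(2)] by simp
  then have "nonbasic a" "\<not> satisfies M a" using base(1,2) satisfies_asubst[of M a \<gamma>'] by auto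
  then show ?case using n(1) by auto
next
  case (step Go Go2)
  have "Go \<noteq> []" using step(1) by (auto elim: step.cases)
  from normalize[OF step(6) this] obtain a Xr E' Y' \<gamma>' where
    n: "steps P (X @ E @ Y) ((a # Xr) @ E' @ Y')" "INVp (a # Xr) E' Y' \<gamma>' Go" by blast
  from one_step[OF safe n(2) step(1)] show ?case
  proof
    assume "nonbasic a \<and> \<not> satisfies M a"
    then show ?thesis using n(1) by auto
  next
    assume "\<exists>X' E'' Y'' \<gamma>''. step P (a # Xr @ E' @ Y') (X' @ E'' @ Y'') \<and> INVp X' E'' Y'' \<gamma>'' Go2"
    then obtain X' E'' Y'' \<gamma>'' where s: "step P (a # Xr @ E' @ Y') (X' @ E'' @ Y'')" "INVp X' E'' Y'' \<gamma>'' Go2"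
      by blast
    from step(3)[OF step(4) step(5) s(2)] obtain A'' G'' where
      r: "nonbasic A''" "\<not> satisfies M A''" "steps P (X' @ E'' @ Y'') (A'' # G'')" by blast
    have "steps P (X @ E @ Y) (X' @ E'' @ Y'')" using n(1) s(1) by simp
    then show ?thesis using r by (meson rtranclp_trans)
  qed
qed

theorem lemma2:
  fixes P :: "('p, 'f, 'v::infinite) program"
    and M :: "'p mode"
    and Eqs G1 G2 :: "('p, 'f, 'v) goal"
  assumes "is_mode M"
    and "safe M P"
    and "\<forall>a\<in>set Eqs. is_eq a"
    and "\<forall>a\<in>set G1. \<not> is_neq a"
    and "\<exists>A' G'. nonbasic A' \<and> \<not> satisfies M A' \<and> steps P (Eqs @ G1 @ G2) (A' # G')"
  shows "\<exists>A'' G''. nonbasic A'' \<and> \<not> satisfies M A'' \<and> steps P (G1 @ Eqs @ G2) (A'' # G'')"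
proof -
  obtain A' G' where A': "nonbasic A'" "\<not> satisfies M A'" "steps P (Eqs @ G1 @ G2) (A' # G')"
    using assms(5) by blast
  from eqs_prefix[OF assms(3) A'(3) A'(1)] obtain Go \<gamma> where
    pre: "steps P Go (A' # G')" "Go = gsubst \<gamma> (G1 @ G2)" "eqs_unif \<gamma> Eqs"
      "\<forall>\<tau>. eqs_unif \<tau> Eqs \<longrightarrow> (\<exists>\<zeta>. gsubst \<tau> (G1 @ G2) = gsubst \<zeta> Go)" by blast
  have nl: "neq_local G1 (Eqs @ G2)" unfolding neq_local_def
  proof (intro allI impI)
    fix A s t B assume "G1 = A @ Neq s t # B"
    then have "Neq s t \<in> set G1" by simp
    then show "(tvars s \<union> tvars t) \<inter> gvars (A @ B @ Eqs @ G2) = {}" using assms(4) by fastforce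
  qed
  have "INVp G1 Eqs G2 \<gamma> Go" unfolding INVp_def using assms(3) pre nl by blast
  from main[OF assms(2) pre(1) A'(1) A'(2) this] show ?thesis .
qed


end
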